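(* For integer $T\ge1$, $$\lim_{T\to\infty}\frac{2T-G(1/T,T)}{2T}=\frac{3e-2}{2(e^2+e+1)}\approx0.2771.$$
   Context: For $p\in(0,1)$, $T\in\mathbb{N}^+$ and $q=1-p$, define $$G(p,T)=\frac{2T+q^{2T-1}\big[\frac{2}{p}-(\frac{p}{2}-2)(T-1)\big]+q^{T-1}\big(2-\frac{2}{p}-\frac{p}{2}-\frac{Tp}{2}+T^2p\big)}{q^{2T-1}+q^{T-1}(T-1)p+Tp}.$$ This is the average peak AoI of the discrete-time Geo-D dual-queue system: one zero-wait sensor with geometric service time of parameter $p$ and one with deterministic service time $T$ slots. The value $2T=2/\mu$ is the average peak AoI of either single queue (geometric or deterministic) with service rate $\mu=1/T$. The expression inside the limit is therefore the relative average peak AoI reduction when both sensors have service rate $\mu=1/T$. *)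

theory Defs
  imports "HOL-Analysis.Analysis"
begin

text \<open>Average peak AoI of the discrete-time Geo-D dual-queue system,
  p in (0,1) the geometric parameter, T the deterministic service time (slots), q = 1 - p.\<close>
definition G :: "real \<Rightarrow> nat \<Rightarrow> real" where
  "G p T = (let q = 1 - p; t = real T in
     (2 * t + q ^ (2 * T - 1) * (2 / p - (p / 2 - 2) * (t - 1))
        + q ^ (T - 1) * (2 - 2 / p - p / 2 - t * p / 2 + t ^ 2 * p))
     / (q ^ (2 * T - 1) + q ^ (T - 1) * (t - 1) * p + t * p))"

end

theory Submission
  imports Defs
begin

definition ff :: "real \<Rightarrow> real \<Rightarrow> real" where
  "ff A u = 1 - (2 + (A^2/(1-u)) * (2 - (u/2-2)*(1-u)) + (A/(1-u)) * (3/2*u - 1 - u^2/2))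
                / (2 * (A^2/(1-u) + A + 1))"

lemma X:
  fixes t A q :: real assumes t2: "t \<ge> 2" and A: "A > 0" and q: "q = 1 - 1/t" and qp: "q > 0"
  shows "ff A (1/t) = (2 * t - (2 * t + (A^2/q) * (2 / (1/t) - ((1/t) / 2 - 2) * (t - 1))
        + (A/q) * (2 - 2 / (1/t) - (1/t) / 2 - t * (1/t) / 2 + t ^ 2 * (1/t)))
     / ((A^2/q) + (A/q) * (t - 1) * (1/t) + t * (1/t))) / (2 * t)"
proof -
  have t0: "t > 0" using t2 by auto
  define N where "N = (2 * t + (A^2/q) * (2 / (1/t) - ((1/t) / 2 - 2) * (t - 1))
        + (A/q) * (2 - 2 / (1/t) - (1/t) / 2 - t * (1/t) / 2 + t ^ 2 * (1/t)))"
  define D where "D = A^2/q + A + 1"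
  have Dp: "D > 0" unfolding D_def using A qp by (simp add: add_pos_pos)
  have hD: "(A^2/q) + (A/q) * (t - 1) * (1/t) + t * (1/t) = D"
  proof -
    have "(t-1)*(1/t) = q" using q t0 by (simp add: field_simps)
    hence "(A/q) * (t - 1) * (1/t) = (A/q) * q" by (metis mult.assoc)
    hence "(A/q) * (t - 1) * (1/t) = A" using qp by simp
    thus ?thesis unfolding D_def using t0 by simp
  qed
  have hN: "N / t = 2 + (A^2/q) * (2 - ((1/t)/2-2)*q) + (A/q) * (3/2*(1/t) - 1 - (1/t)^2/2)"
  proof -
    have a: "(2 / (1/t) - ((1/t) / 2 - 2) * (t - 1)) / t = 2 - ((1/t)/2-2)*q"
      unfolding q using t0 by (simp add: field_simps)
    have b: "(2 - 2 / (1/t) - (1/t) / 2 - t * (1/t) / 2 + t ^ 2 * (1/t)) / t = 3/2*(1/t) - 1 - (1/t)^2/2"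
      using t0 by (simp add: field_simps power2_eq_square)
    have "N / t = 2 + (A^2/q) * ((2 / (1/t) - ((1/t) / 2 - 2) * (t - 1)) / t)
       + (A/q) * ((2 - 2 / (1/t) - (1/t) / 2 - t * (1/t) / 2 + t ^ 2 * (1/t)) / t)"
    proof -
      have g: "\<And>a b y z. (2*t + a*y + b*z)/t = 2 + a*(y/t) + b*(z/t)" using t0 by (simp add: field_simps)
      show ?thesis unfolding N_def by (rule g)
    qed
    then show ?thesis by (simp only: a b)
  qed
  have "ff A (1/t) = 1 - (N/t) / (2*D)" unfolding ff_def hN D_def q by simp
  also have "\<dots> = (2*t - N/D) / (2*t)" using t0 Dp by (simp add: field_simps)
  finally show ?thesis unfolding hD N_def[symmetric] .
qed

lemma eq_ff:
  assumes n: "n \<ge> 2"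
  shows "(2 * real n - G (1 / real n) n) / (2 * real n) = ff ((1 + -1 / real n) ^ n) (1 / real n)"
proof -
  define t where "t = real n"
  define q where "q = 1 - 1 / t"
  have t2: "t \<ge> 2" using n t_def by simp
  have "1/t < 1" using t2 by simp
  hence qpos: "q > 0" using q_def by simp
  define A where "A = q ^ n"
  have e1: "q ^ (n - 1) = A / q"
  proof -
    have "A = q * q ^ (n - 1)" unfolding A_def using n
      by (metis Suc_diff_1 less_le_trans pos2 power_Suc)
    then show ?thesis using qpos by simp
  qed
  have e2: "q ^ (2*n - 1) = A^2 / q"
  proof -
    have "A^2 = q ^ (2*n)" unfolding A_def by (simp add: power_mult[symmetric] mult.commute)
    also have "\<dots> = q * q ^ (2*n - 1)" using n
      by (metis Suc_diff_1 less_le_trans pos2 power_Suc nat_0_less_mult_iff)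
    finally show ?thesis using qpos by simp
  qed
  have Aeq: "(1 + -1 / real n) ^ n = A" using A_def q_def t_def by simp
  have u: "1 - 1/t = q" using q_def by simp
  have Geq: "G (1 / real n) n = (2 * t + (A^2/q) * (2 / (1/t) - ((1/t) / 2 - 2) * (t - 1))
        + (A/q) * (2 - 2 / (1/t) - (1/t) / 2 - t * (1/t) / 2 + t ^ 2 * (1/t)))
     / ((A^2/q) + (A/q) * (t - 1) * (1/t) + t * (1/t))"
    unfolding G_def Let_def using e1 e2 t_def q_def by simp
  have Ap: "A > 0" unfolding A_def using qpos by simp
  have "ff A (1/t) = (2 * t - G (1 / real n) n) / (2 * t)"
    unfolding Geq by (rule X[OF t2 Ap q_def qpos])
  then show ?thesis using Aeq t_def by simp
qed

theorem mainTheorem7: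
  shows "(\<lambda>T::nat. (2 * real T - G (1 / real T) T) / (2 * real T))
           \<longlonglongrightarrow> (3 * exp 1 - 2) / (2 * (exp 1 ^ 2 + exp 1 + 1))"
proof -
  have A: "(\<lambda>n. (1 + -1 / real n) ^ n) \<longlonglongrightarrow> exp (-1)"
    using tendsto_exp_limit_sequentially[of "-1"] by simp
  have u: "(\<lambda>n. 1 / real n) \<longlonglongrightarrow> 0"
    using lim_1_over_n by simp
  have pos: "exp (-1::real) ^ 2 + exp (-1) + 1 > 0" by (simp add: add_pos_pos)
  have L: "(\<lambda>n. ff ((1 + -1 / real n) ^ n) (1 / real n)) \<longlonglongrightarrow> ff (exp (-1)) 0"
    unfolding ff_def using pos
    by (intro tendsto_intros A u) auto
  have v: "ff (exp (-1)) 0 = (3 * exp 1 - 2) / (2 * (exp 1 ^ 2 + exp 1 + 1))"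
  proof -
    have "\<And>e::real. e > 0 \<Longrightarrow> ff (inverse e) 0 = (3 * e - 2) / (2 * (e ^ 2 + e + 1))"
    proof -
      fix e :: real assume e: "e > 0"
      have d: "e^2 + e + 1 > 0" using e by (simp add: add_pos_pos)
      have "ff (inverse e) 0 = 1 - (2 + 4 * (inverse e)^2 - inverse e) / (2 * ((inverse e)^2 + inverse e + 1))"
        unfolding ff_def by (simp add: algebra_simps)
      also have "(2 + 4 * (inverse e)^2 - inverse e) = (2*e^2 + 4 - e) / e^2"
        using e by (simp add: field_simps power2_eq_square)
      also have "((inverse e)^2 + inverse e + 1) = (e^2 + e + 1) / e^2"
        using e by (simp add: field_simps power2_eq_square)
      also have "1 - ((2*e^2 + 4 - e) / e^2) / (2 * ((e^2 + e + 1) / e^2)) = 1 - (2*e^2 + 4 - e) / (2 * (e^2 + e + 1))"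
        using e by simp
      also have "\<dots> = (3 * e - 2) / (2 * (e ^ 2 + e + 1))"
        using d by (simp add: field_simps)
      finally show "ff (inverse e) 0 = (3 * e - 2) / (2 * (e ^ 2 + e + 1))" .
    qed
    then show ?thesis by (simp add: exp_minus)
  qed
  have ev: "\<forall>\<^sub>F n in sequentially. ff ((1 + -1 / real n) ^ n) (1 / real n)
      = (2 * real n - G (1 / real n) n) / (2 * real n)"
    using eventually_ge_at_top[of 2] by eventually_elim (simp add: eq_ff)
  show ?thesis using Lim_transform_eventually[OF L ev] v by simp
qed

end
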